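(* Let $C_1\subseteq V^n$ and $C_2\subseteq V^m$ be irreducible closed sets in the PQF-topology. Then $C_1\times C_2$ is irreducible (in the PQF-topology on $V^{n+m}$).
   Context: $F$ is an algebraically closed field of characteristic $0$, $V$ a vector space over $\mathbb{Q}$, and $\exp:(V,+)\to(F^*,\cdot)$ a surjective group homomorphism with kernel $K\cong\mathbb{Z}$. The structure $V$ is considered in the language $\{0,+,(f_q)_{q\in\mathbb{Q}},R_+,R_0\}$ where $f_q$ is scalar multiplication by $q$, $R_+(v_1,v_2,v_3)$ iff $\exp(v_1)+\exp(v_2)=\exp(v_3)$ and $R_0(v_1,v_2)$ iff $\exp(v_1)+\exp(v_2)=0$. The PQF-topology on $V^n$: the basic closed sets are the subsets of $V^n$ definable by positive (negation-free) quantifier-free first-order formulas with parameters; closed sets are intersections of basic closed sets. A nonempty closed set is irreducible if it is not the union of two proper closed subsets. *)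

theory Defs
  imports Main "HOL-Computational_Algebra.Polynomial"
begin

definition alg_closed :: "'f::field itself \<Rightarrow> bool" where
  "alg_closed _ \<longleftrightarrow> (\<forall>p::'f poly. degree p > 0 \<longrightarrow> (\<exists>x. poly p x = 0))"

definition exp_setting :: "(rat \<Rightarrow> 'v::ab_group_add \<Rightarrow> 'v) \<Rightarrow> ('v \<Rightarrow> 'f::field_char_0) \<Rightarrow> bool" where
  "exp_setting sm ex \<longleftrightarrow>
     alg_closed TYPE('f) \<and>
     vector_space sm \<and>
     (\<forall>u v. ex (u + v) = ex u * ex v) \<and>
     (\<forall>v. ex v \<noteq> 0) \<and>
     (\<forall>y. y \<noteq> 0 \<longrightarrow> (\<exists>v. ex v = y)) \<and>
     (\<exists>k. k \<noteq> 0 \<and> {v. ex v = 1} = range (\<lambda>z::int. sm (of_int z) k))"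

datatype 'v trm = Var nat | Par 'v | Zero | Plus "'v trm" "'v trm" | Smul rat "'v trm"

datatype 'v pfm = TT | FF | Eq "'v trm" "'v trm" | Rplus "'v trm" "'v trm" "'v trm"
  | Rzero "'v trm" "'v trm" | Conj "'v pfm" "'v pfm" | Disj "'v pfm" "'v pfm"

fun tvars :: "'v trm \<Rightarrow> nat set" where
  "tvars (Var i) = {i}"
| "tvars (Par c) = {}"
| "tvars Zero = {}"
| "tvars (Plus s t) = tvars s \<union> tvars t"
| "tvars (Smul q t) = tvars t"

fun fvars :: "'v pfm \<Rightarrow> nat set" where
  "fvars TT = {}"
| "fvars FF = {}"
| "fvars (Eq s t) = tvars s \<union> tvars t"
| "fvars (Rplus s t u) = tvars s \<union> tvars t \<union> tvars u"
| "fvars (Rzero s t) = tvars s \<union> tvars t"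
| "fvars (Conj p q) = fvars p \<union> fvars q"
| "fvars (Disj p q) = fvars p \<union> fvars q"

fun teval :: "(rat \<Rightarrow> 'v::ab_group_add \<Rightarrow> 'v) \<Rightarrow> 'v list \<Rightarrow> 'v trm \<Rightarrow> 'v" where
  "teval sm xs (Var i) = xs ! i"
| "teval sm xs (Par c) = c"
| "teval sm xs Zero = 0"
| "teval sm xs (Plus s t) = teval sm xs s + teval sm xs t"
| "teval sm xs (Smul q t) = sm q (teval sm xs t)"

fun holds :: "(rat \<Rightarrow> 'v::ab_group_add \<Rightarrow> 'v) \<Rightarrow> ('v \<Rightarrow> 'f::field) \<Rightarrow> 'v list \<Rightarrow> 'v pfm \<Rightarrow> bool" where
  "holds sm ex xs TT = True"
| "holds sm ex xs FF = False"
| "holds sm ex xs (Eq s t) = (teval sm xs s = teval sm xs t)"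
| "holds sm ex xs (Rplus s t u) =
     (ex (teval sm xs s) + ex (teval sm xs t) = ex (teval sm xs u))"
| "holds sm ex xs (Rzero s t) = (ex (teval sm xs s) + ex (teval sm xs t) = 0)"
| "holds sm ex xs (Conj p q) = (holds sm ex xs p \<and> holds sm ex xs q)"
| "holds sm ex xs (Disj p q) = (holds sm ex xs p \<or> holds sm ex xs q)"

definition tuples :: "nat \<Rightarrow> 'v list set" where
  "tuples n = {xs. length xs = n}"

definition pqf_basic :: "(rat \<Rightarrow> 'v::ab_group_add \<Rightarrow> 'v) \<Rightarrow> ('v \<Rightarrow> 'f::field) \<Rightarrow> nat \<Rightarrow> 'v list set \<Rightarrow> bool" where
  "pqf_basic sm ex n S \<longleftrightarrow>
     (\<exists>\<phi>. fvars \<phi> \<subseteq> {..<n} \<and> S = {xs \<in> tuples n. holds sm ex xs \<phi>})"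

definition pqf_closed :: "(rat \<Rightarrow> 'v::ab_group_add \<Rightarrow> 'v) \<Rightarrow> ('v \<Rightarrow> 'f::field) \<Rightarrow> nat \<Rightarrow> 'v list set \<Rightarrow> bool" where
  "pqf_closed sm ex n S \<longleftrightarrow>
     (\<exists>\<F>. (\<forall>B\<in>\<F>. pqf_basic sm ex n B) \<and> S = tuples n \<inter> \<Inter>\<F>)"

definition pqf_irreducible :: "(rat \<Rightarrow> 'v::ab_group_add \<Rightarrow> 'v) \<Rightarrow> ('v \<Rightarrow> 'f::field) \<Rightarrow> nat \<Rightarrow> 'v list set \<Rightarrow> bool" where
  "pqf_irreducible sm ex n C \<longleftrightarrow>
     pqf_closed sm ex n C \<and> C \<noteq> {} \<and>
     \<not> (\<exists>A B. pqf_closed sm ex n A \<and> pqf_closed sm ex n B \<and> A \<subset> C \<and> B \<subset> C \<and> C = A \<union> B)"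

definition tuple_prod :: "'v list set \<Rightarrow> 'v list set \<Rightarrow> 'v list set" where
  "tuple_prod C1 C2 = {xs @ ys | xs ys. xs \<in> C1 \<and> ys \<in> C2}"

end

theory Submission
  imports Defs
begin

fun tsubst :: "(nat \<Rightarrow> 'v trm) \<Rightarrow> 'v trm \<Rightarrow> 'v trm" where
  "tsubst f (Var i) = f i"
| "tsubst f (Par c) = Par c"
| "tsubst f Zero = Zero"
| "tsubst f (Plus s t) = Plus (tsubst f s) (tsubst f t)"
| "tsubst f (Smul q t) = Smul q (tsubst f t)"

fun psubst :: "(nat \<Rightarrow> 'v trm) \<Rightarrow> 'v pfm \<Rightarrow> 'v pfm" where
  "psubst f TT = TT"
| "psubst f FF = FF"
| "psubst f (Eq s t) = Eq (tsubst f s) (tsubst f t)"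
| "psubst f (Rplus s t u) = Rplus (tsubst f s) (tsubst f t) (tsubst f u)"
| "psubst f (Rzero s t) = Rzero (tsubst f s) (tsubst f t)"
| "psubst f (Conj p q) = Conj (psubst f p) (psubst f q)"
| "psubst f (Disj p q) = Disj (psubst f p) (psubst f q)"

lemma teval_tsubst:
  "(\<forall>i\<in>tvars t. teval sm xs (f i) = ys ! i) \<Longrightarrow> teval sm xs (tsubst f t) = teval sm ys t"
  by (induction t) auto

lemma holds_psubst:
  "(\<forall>i\<in>fvars p. teval sm xs (f i) = ys ! i) \<Longrightarrow> holds sm ex xs (psubst f p) = holds sm ex ys p"
proof (induction p)
  case (Eq s t)
  then show ?case using teval_tsubst[of s sm xs f ys] teval_tsubst[of t sm xs f ys] by simp
next
  case (Rplus s t u)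
  then show ?case using teval_tsubst[of s sm xs f ys] teval_tsubst[of t sm xs f ys]
      teval_tsubst[of u sm xs f ys] by simp
next
  case (Rzero s t)
  then show ?case using teval_tsubst[of s sm xs f ys] teval_tsubst[of t sm xs f ys] by simp
qed auto

lemma tvars_tsubst: "tvars (tsubst f t) \<subseteq> (\<Union>i\<in>tvars t. tvars (f i))"
  by (induction t) auto

lemma fvars_psubst: "fvars (psubst f p) \<subseteq> (\<Union>i\<in>fvars p. tvars (f i))"
  using tvars_tsubst by (induction p) auto

lemma closed_sub: "pqf_closed sm ex k S \<Longrightarrow> S \<subseteq> tuples k"
  unfolding pqf_closed_def by auto

lemma closed_Inter:
  assumes "\<forall>S\<in>SS. pqf_closed sm ex k S"
  shows "pqf_closed sm ex k (tuples k \<inter> \<Inter>SS)"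
proof -
  have "\<forall>S\<in>SS. \<exists>F. (\<forall>B\<in>F. pqf_basic sm ex k B) \<and> S = tuples k \<inter> \<Inter>F"
    using assms unfolding pqf_closed_def by blast
  then obtain FF where FF: "\<And>S. S\<in>SS \<Longrightarrow> (\<forall>B\<in>FF S. pqf_basic sm ex k B) \<and> S = tuples k \<inter> \<Inter>(FF S)"
    by metis
  have "tuples k \<inter> \<Inter>SS = tuples k \<inter> \<Inter>(\<Union>S\<in>SS. FF S)"
  proof
    show "tuples k \<inter> \<Inter>SS \<subseteq> tuples k \<inter> \<Inter>(\<Union>S\<in>SS. FF S)"
    proof
      fix x assume "x \<in> tuples k \<inter> \<Inter>SS"
      then have x1: "x \<in> tuples k" and x2: "\<And>S. S \<in> SS \<Longrightarrow> x \<in> S" by auto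
      have "x \<in> B" if "B \<in> (\<Union>S\<in>SS. FF S)" for B
      proof -
        from that obtain S where S: "S \<in> SS" "B \<in> FF S" by blast
        have "x \<in> tuples k \<inter> \<Inter>(FF S)" using x2[OF S(1)] FF[OF S(1)] by simp
        then show ?thesis using S(2) by blast
      qed
      then show "x \<in> tuples k \<inter> \<Inter>(\<Union>S\<in>SS. FF S)" using x1 by blast
    qed
    show "tuples k \<inter> \<Inter>(\<Union>S\<in>SS. FF S) \<subseteq> tuples k \<inter> \<Inter>SS"
    proof
      fix x assume x: "x \<in> tuples k \<inter> \<Inter>(\<Union>S\<in>SS. FF S)"
      { fix S assume S: "S \<in> SS"
        have "x \<in> tuples k \<inter> \<Inter>(FF S)" using x S by blast
        then have "x \<in> S" using FF[OF S] by simp }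
      then show "x \<in> tuples k \<inter> \<Inter>SS" using x by blast
    qed
  qed
  moreover have "\<forall>B\<in>(\<Union>S\<in>SS. FF S). pqf_basic sm ex k B" using FF by blast
  ultimately show ?thesis unfolding pqf_closed_def by blast
qed

lemma closed_Int:
  assumes "pqf_closed sm ex k A" "pqf_closed sm ex k B"
  shows "pqf_closed sm ex k (A \<inter> B)"
proof -
  have "A \<inter> B = tuples k \<inter> \<Inter>{A, B}" using closed_sub[OF assms(1)] by auto
  then show ?thesis using closed_Inter[of "{A,B}" sm ex k] assms by simp
qed

lemma closed_preimage:
  assumes S: "pqf_closed sm ex N S"
    and g: "\<And>zs. zs \<in> tuples k \<Longrightarrow> g zs \<in> tuples N"
    and fv: "\<And>i. i < N \<Longrightarrow> tvars (f i) \<subseteq> {..<k}"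
    and fe: "\<And>zs i. zs \<in> tuples k \<Longrightarrow> i < N \<Longrightarrow> teval sm zs (f i) = g zs ! i"
  shows "pqf_closed sm ex k {zs \<in> tuples k. g zs \<in> S}"
proof -
  obtain F where F: "\<forall>B\<in>F. pqf_basic sm ex N B" "S = tuples N \<inter> \<Inter>F"
    using S unfolding pqf_closed_def by blast
  have basic: "pqf_basic sm ex k {zs \<in> tuples k. g zs \<in> B}" if "B \<in> F" for B
  proof -
    have "pqf_basic sm ex N B" using F(1) that by (rule bspec)
    then have "\<exists>\<phi>. fvars \<phi> \<subseteq> {..<N} \<and> B = {xs \<in> tuples N. holds sm ex xs \<phi>}"
      unfolding pqf_basic_def .
    then obtain \<phi> where \<phi>0: "fvars \<phi> \<subseteq> {..<N} \<and> B = {xs \<in> tuples N. holds sm ex xs \<phi>}"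
      by (rule exE)
    then have \<phi>: "fvars \<phi> \<subseteq> {..<N}" "B = {xs \<in> tuples N. holds sm ex xs \<phi>}"
      by simp_all
    have h: "(\<Union>i\<in>fvars \<phi>. tvars (f i)) \<subseteq> {..<k}"
    proof (rule UN_least)
      fix i assume "i \<in> fvars \<phi>"
      then have "i < N" using \<phi>(1) by auto
      then show "tvars (f i) \<subseteq> {..<k}" by (rule fv)
    qed
    have fvk: "fvars (psubst f \<phi>) \<subseteq> {..<k}" using fvars_psubst[of f \<phi>] h by (rule subset_trans)
    have eq: "(g zs \<in> B) = holds sm ex zs (psubst f \<phi>)" if zs: "zs \<in> tuples k" for zs
    proof -
      have "\<forall>i\<in>fvars \<phi>. teval sm zs (f i) = g zs ! i"
      proof
        fix i assume "i \<in> fvars \<phi>"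
        then have "i < N" using \<phi>(1) by auto
        then show "teval sm zs (f i) = g zs ! i" by (rule fe[OF zs])
      qed
      then have "holds sm ex zs (psubst f \<phi>) = holds sm ex (g zs) \<phi>"
        by (rule holds_psubst)
      moreover have "(g zs \<in> B) = holds sm ex (g zs) \<phi>" using \<phi>(2) g[OF zs] by simp
      ultimately show ?thesis by simp
    qed
    have "{zs \<in> tuples k. g zs \<in> B} = {zs \<in> tuples k. holds sm ex zs (psubst f \<phi>)}"
    proof (rule set_eqI)
      fix zs show "zs \<in> {zs \<in> tuples k. g zs \<in> B} \<longleftrightarrow> zs \<in> {zs \<in> tuples k. holds sm ex zs (psubst f \<phi>)}"
        using eq[of zs] by auto
    qed
    then show ?thesis unfolding pqf_basic_def using fvk by (intro exI[of _ "psubst f \<phi>"] conjI)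
  qed
  have "{zs \<in> tuples k. g zs \<in> S} = tuples k \<inter> \<Inter>((\<lambda>B. {zs \<in> tuples k. g zs \<in> B}) ` F)"
  proof (intro set_eqI iffI)
    fix zs assume "zs \<in> {zs \<in> tuples k. g zs \<in> S}"
    then show "zs \<in> tuples k \<inter> \<Inter>((\<lambda>B. {zs \<in> tuples k. g zs \<in> B}) ` F)"
      using F(2) by blast
  next
    fix zs assume zs: "zs \<in> tuples k \<inter> \<Inter>((\<lambda>B. {zs \<in> tuples k. g zs \<in> B}) ` F)"
    then have "zs \<in> tuples k" "\<And>B. B \<in> F \<Longrightarrow> g zs \<in> B" by auto
    then show "zs \<in> {zs \<in> tuples k. g zs \<in> S}" using F(2) g by blast
  qed
  moreover have "\<forall>B'\<in>(\<lambda>B. {zs \<in> tuples k. g zs \<in> B}) ` F. pqf_basic sm ex k B'"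
    using basic by blast
  ultimately show ?thesis unfolding pqf_closed_def
    by (intro exI[of _ "(\<lambda>B. {zs \<in> tuples k. g zs \<in> B}) ` F"] conjI)
qed

lemma irr_split:
  assumes "pqf_irreducible sm ex k C" "pqf_closed sm ex k A" "pqf_closed sm ex k B" "C \<subseteq> A \<union> B"
  shows "C \<subseteq> A \<or> C \<subseteq> B"
proof (rule ccontr)
  assume nc: "\<not> (C \<subseteq> A \<or> C \<subseteq> B)"
  have cC: "pqf_closed sm ex k C" using assms(1) unfolding pqf_irreducible_def by blast
  have "pqf_closed sm ex k (A \<inter> C)" "pqf_closed sm ex k (B \<inter> C)"
    using closed_Int cC assms by blast+
  moreover have "A \<inter> C \<subset> C" "B \<inter> C \<subset> C" "C = (A \<inter> C) \<union> (B \<inter> C)" using nc assms(4) by auto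
  moreover have irr: "\<not> (\<exists>A B. pqf_closed sm ex k A \<and> pqf_closed sm ex k B \<and> A \<subset> C \<and> B \<subset> C \<and> C = A \<union> B)"
    using assms(1) unfolding pqf_irreducible_def by (rule conjunct2[THEN conjunct2])
  ultimately show False
    by (meson irr)
qed

lemma closed_take:
  assumes "pqf_closed sm ex n C"
  shows "pqf_closed sm ex (n + m) {zs \<in> tuples (n + m). take n zs \<in> C}"
  by (rule closed_preimage[OF assms, where f = Var]) (auto simp: tuples_def)

lemma closed_drop:
  assumes "pqf_closed sm ex m C"
  shows "pqf_closed sm ex (n + m) {zs \<in> tuples (n + m). drop n zs \<in> C}"
  by (rule closed_preimage[OF assms, where f = "\<lambda>i. Var (i + n)"]) (auto simp: tuples_def add.commute)

lemma closed_slice1: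
  assumes "pqf_closed sm ex (n + m) A" "a \<in> tuples n"
  shows "pqf_closed sm ex m {y \<in> tuples m. a @ y \<in> A}"
  by (rule closed_preimage[OF assms(1),
        where f = "\<lambda>i. if i < n then Par (a ! i) else Var (i - n)"])
     (use assms(2) in \<open>auto simp: tuples_def nth_append\<close>)

lemma closed_slice2:
  assumes "pqf_closed sm ex (n + m) A" "b \<in> tuples m"
  shows "pqf_closed sm ex n {x \<in> tuples n. x @ b \<in> A}"
  by (rule closed_preimage[OF assms(1),
        where f = "\<lambda>i. if i < n then Var i else Par (b ! (i - n))"])
     (use assms(2) in \<open>auto simp: tuples_def nth_append\<close>)

theorem lemma5p17:
  fixes sm :: "rat \<Rightarrow> 'v::ab_group_add \<Rightarrow> 'v" and ex :: "'v \<Rightarrow> 'f::field_char_0"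
    and n m :: nat and C1 C2 :: "'v list set"
  assumes "exp_setting sm ex"
    and "pqf_irreducible sm ex n C1"
    and "pqf_irreducible sm ex m C2"
  shows "pqf_irreducible sm ex (n + m) (tuple_prod C1 C2)"
proof -
  have c1: "pqf_closed sm ex n C1" "C1 \<noteq> {}" using assms(2) unfolding pqf_irreducible_def by auto
  have c2: "pqf_closed sm ex m C2" "C2 \<noteq> {}" using assms(3) unfolding pqf_irreducible_def by auto
  have s1: "C1 \<subseteq> tuples n" using c1(1) by (rule closed_sub)
  have s2: "C2 \<subseteq> tuples m" using c2(1) by (rule closed_sub)
  let ?P = "tuple_prod C1 C2"
  have Peq: "?P = {zs \<in> tuples (n + m). take n zs \<in> C1} \<inter> {zs \<in> tuples (n + m). drop n zs \<in> C2}"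
  proof
    show "?P \<subseteq> {zs \<in> tuples (n + m). take n zs \<in> C1} \<inter> {zs \<in> tuples (n + m). drop n zs \<in> C2}"
    proof
      fix zs assume "zs \<in> ?P"
      then obtain x y where zs: "zs = x @ y" "x \<in> C1" "y \<in> C2" unfolding tuple_prod_def by blast
      have "length x = n" "length y = m" using zs s1 s2 by (auto simp: tuples_def)
      then show "zs \<in> {zs \<in> tuples (n + m). take n zs \<in> C1} \<inter> {zs \<in> tuples (n + m). drop n zs \<in> C2}"
        using zs by (simp add: tuples_def)
    qed
    show "{zs \<in> tuples (n + m). take n zs \<in> C1} \<inter> {zs \<in> tuples (n + m). drop n zs \<in> C2} \<subseteq> ?P"
    proof
      fix zs assume "zs \<in> {zs \<in> tuples (n + m). take n zs \<in> C1} \<inter> {zs \<in> tuples (n + m). drop n zs \<in> C2}"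
      then have "take n zs \<in> C1" "drop n zs \<in> C2" by auto
      moreover have "zs = take n zs @ drop n zs" by simp
      ultimately show "zs \<in> ?P" unfolding tuple_prod_def by blast
    qed
  qed
  have Pc: "pqf_closed sm ex (n + m) ?P"
    unfolding Peq by (intro closed_Int closed_take closed_drop c1 c2)
  have Pne: "?P \<noteq> {}"
  proof -
    obtain x y where "x \<in> C1" "y \<in> C2" using c1(2) c2(2) by blast
    then have "x @ y \<in> ?P" unfolding tuple_prod_def by blast
    then show ?thesis by blast
  qed
  have mem: "x @ y \<in> ?P" if "x \<in> C1" "y \<in> C2" for x y
    using that unfolding tuple_prod_def by blast
  have key: "?P \<subseteq> A \<or> ?P \<subseteq> B" if A: "pqf_closed sm ex (n + m) A" and B: "pqf_closed sm ex (n + m) B"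
    and PAB: "?P \<subseteq> A \<union> B" for A B
  proof -
    define XA where "XA = tuples n \<inter> \<Inter>((\<lambda>y. {x \<in> tuples n. x @ y \<in> A}) ` C2)"
    define XB where "XB = tuples n \<inter> \<Inter>((\<lambda>y. {x \<in> tuples n. x @ y \<in> B}) ` C2)"
    have XA: "pqf_closed sm ex n XA" unfolding XA_def
    proof (rule closed_Inter, rule ballI)
      fix S assume "S \<in> (\<lambda>y. {x \<in> tuples n. x @ y \<in> A}) ` C2"
      then obtain y where "y \<in> C2" "S = {x \<in> tuples n. x @ y \<in> A}" by blast
      then show "pqf_closed sm ex n S" using closed_slice2[of sm ex n m A y, OF A] s2 by blast
    qed
    have XB: "pqf_closed sm ex n XB" unfolding XB_def
    proof (rule closed_Inter, rule ballI)
      fix S assume "S \<in> (\<lambda>y. {x \<in> tuples n. x @ y \<in> B}) ` C2"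
      then obtain y where "y \<in> C2" "S = {x \<in> tuples n. x @ y \<in> B}" by blast
      then show "pqf_closed sm ex n S" using closed_slice2[of sm ex n m B y, OF B] s2 by blast
    qed
    have "C1 \<subseteq> XA \<union> XB"
    proof
      fix x assume x: "x \<in> C1"
      have xt: "x \<in> tuples n" using x s1 by blast
      have "C2 \<subseteq> {y \<in> tuples m. x @ y \<in> A} \<union> {y \<in> tuples m. x @ y \<in> B}"
      proof
        fix y assume y: "y \<in> C2"
        have "x @ y \<in> A \<union> B" using mem[OF x y] PAB by blast
        then show "y \<in> {y \<in> tuples m. x @ y \<in> A} \<union> {y \<in> tuples m. x @ y \<in> B}"
          using y s2 by blast
      qed
      then have "C2 \<subseteq> {y \<in> tuples m. x @ y \<in> A} \<or> C2 \<subseteq> {y \<in> tuples m. x @ y \<in> B}"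
        by (rule irr_split[OF assms(3) closed_slice1[of sm ex n m A x, OF A xt] closed_slice1[of sm ex n m B x, OF B xt]])
      then show "x \<in> XA \<union> XB"
      proof
        assume "C2 \<subseteq> {y \<in> tuples m. x @ y \<in> A}"
        then have "x \<in> XA" unfolding XA_def using xt by blast
        then show ?thesis by blast
      next
        assume "C2 \<subseteq> {y \<in> tuples m. x @ y \<in> B}"
        then have "x \<in> XB" unfolding XB_def using xt by blast
        then show ?thesis by blast
      qed
    qed
    then have "C1 \<subseteq> XA \<or> C1 \<subseteq> XB" by (rule irr_split[OF assms(2) XA XB])
    then show ?thesis
    proof
      assume h: "C1 \<subseteq> XA"
      have "?P \<subseteq> A"
      proof
        fix zs assume "zs \<in> ?P"
        then obtain x y where zs: "zs = x @ y" "x \<in> C1" "y \<in> C2" unfolding tuple_prod_def by blast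
        then have "x \<in> XA" using h by blast
        then show "zs \<in> A" using zs unfolding XA_def by blast
      qed
      then show ?thesis by blast
    next
      assume h: "C1 \<subseteq> XB"
      have "?P \<subseteq> B"
      proof
        fix zs assume "zs \<in> ?P"
        then obtain x y where zs: "zs = x @ y" "x \<in> C1" "y \<in> C2" unfolding tuple_prod_def by blast
        then have "x \<in> XB" using h by blast
        then show "zs \<in> B" using zs unfolding XB_def by blast
      qed
      then show ?thesis by blast
    qed
  qed
  have notred: "\<not> (\<exists>A B. pqf_closed sm ex (n + m) A \<and> pqf_closed sm ex (n + m) B \<and> A \<subset> ?P \<and> B \<subset> ?P \<and> ?P = A \<union> B)"
  proof
    assume "\<exists>A B. pqf_closed sm ex (n + m) A \<and> pqf_closed sm ex (n + m) B \<and> A \<subset> ?P \<and> B \<subset> ?P \<and> ?P = A \<union> B"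
    then obtain A B where AB: "pqf_closed sm ex (n + m) A" "pqf_closed sm ex (n + m) B" "A \<subset> ?P" "B \<subset> ?P" "?P = A \<union> B"
      by blast
    have "?P \<subseteq> A \<union> B" using AB(5) by simp
    then have "?P \<subseteq> A \<or> ?P \<subseteq> B" by (rule key[OF AB(1) AB(2)])
    then show False using AB(3) AB(4) by blast
  qed
  show ?thesis unfolding pqf_irreducible_def by (intro conjI Pc Pne notred)
qed

end
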